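(* Let $n\ge1$, $N,M\ge1$. Users have opinions $u_i^t\in[-1,1]^n$ ($i=1,\dots,N$) and creators have opinions $c_j^t\in[-1,1]^n$ ($j=1,\dots,M$). Assume the social adjacency matrix $A$ is diagonal, with $A_{ii}\in(0,1]$, and that creators are fully stubborn, $\Gamma=I_M$, so that $c_j^t=c_j^0=:c_j$ for all $t$. Let the recommender be greedy: at each time $t$, user $i$ consumes the content of creator $j(i,t)\in\arg\min_{j}\|c_j^t-u_i^t\|_2$, and the user opinions evolve as $$u_i^{t+1}=(1-\lambda_i)\big(A_{ii}\,u_i^t+(1-A_{ii})\,c_{j(i,t)}\big)+\lambda_i\,u_i^0,$$ with stubbornness $\lambda_i\in(0,1]$. Then the induced user partition $\mathcal F^t_1,\dots,\mathcal F^t_M$, where $\mathcal F^t_j=\{i: j(i,t)=j\}$, is static (i.e. $\mathcal F^t_j=\mathcal F^0_j$ for all $t$ and $j$), and each user's opinion converges to a steady state $u_i^*\in\mathbb R^n$. Moreover, for every user $i\in\mathcal F_j$, the distance $\|u_i^t-c_j\|_2$ decreases monotonically in time, i.e. $\|u_i^{t+1}-c_j\|_2\le\|u_i^t-c_j\|_2$ for all $t\ge0$.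
   Context: This is the multi-topic Friedkin–Johnsen user–creator dynamics specialized to a diagonal social influence matrix $A$ (no user–user interaction) and fully stubborn creators. In the general model, $u^{t+1}_i=(1-\lambda_i)\big(\sum_k A_{ik}u_k^t+\sum_j B^t_{ij}c_j^t\big)+\lambda_i u_i^0$ where $B^t_{ij}\neq0$ only for the creator $j$ consumed by user $i$ at time $t$ and $\sum_kA_{ik}+\sum_jB^t_{ij}=1$; with $A$ diagonal this gives $B^t_{i,j(i,t)}=1-A_{ii}$. The greedy recommender gives each user the single creator closest (in Euclidean norm) to the user's current opinion; ties in the argmin are broken by a fixed deterministic rule (e.g. smallest index). *)

theory Defs
  imports "HOL-Analysis.Analysis"
begin

definition greedy :: "(nat \<Rightarrow> real^'n) \<Rightarrow> nat \<Rightarrow> real^'n \<Rightarrow> nat" where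
  "greedy c M x = (LEAST j. j < M \<and> (\<forall>k<M. norm (c j - x) \<le> norm (c k - x)))"

text \<open>Opinion trajectory of a single user with diagonal influence entry a = A_ii,
  stubbornness l = lambda_i, initial opinion x0, facing fully stubborn creators c.
  With A diagonal, B^t_{i,j(i,t)} = 1 - A_ii.\<close>
primrec user_traj :: "(nat \<Rightarrow> real^'n) \<Rightarrow> nat \<Rightarrow> real \<Rightarrow> real \<Rightarrow> real^'n \<Rightarrow> nat \<Rightarrow> real^'n" where
  "user_traj c M a l x0 0 = x0"
| "user_traj c M a l x0 (Suc t) =
     (1 - l) *\<^sub>R (a *\<^sub>R user_traj c M a l x0 t
                     + (1 - a) *\<^sub>R c (greedy c M (user_traj c M a l x0 t)))
     + l *\<^sub>R x0"

end

theory Submission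
  imports Defs
begin

primrec ssq :: "real \<Rightarrow> real \<Rightarrow> nat \<Rightarrow> real" where
  "ssq b l 0 = 1"
| "ssq b l (Suc t) = b * ssq b l t + l"

lemma greedy_prop:
  assumes "M \<ge> 1"
  shows "greedy c M x < M \<and> (\<forall>k<M. norm (c (greedy c M x) - x) \<le> norm (c k - x))
     \<and> (\<forall>k<greedy c M x. norm (c (greedy c M x) - x) < norm (c k - x))"
proof -
  let ?P = "\<lambda>j. j < M \<and> (\<forall>k<M. norm (c j - x) \<le> norm (c k - x))"
  let ?m = "Min ((\<lambda>k. norm (c k - x)) ` {..<M})"
  have fin: "finite ((\<lambda>k. norm (c k - x)) ` {..<M})" by simp
  have "0 \<in> {..<M}" using assms by simp
  hence ne: "(\<lambda>k. norm (c k - x)) ` {..<M} \<noteq> {}" by blast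
  obtain j1 where j1: "j1 < M" "?m = norm (c j1 - x)" using Min_in[OF fin ne] by auto
  have "\<forall>k<M. ?m \<le> norm (c k - x)" using Min_le[OF fin] by auto
  hence "?P j1" using j1 by auto
  hence P: "?P (greedy c M x)" unfolding greedy_def by (rule LeastI[where k=j1])
  have "norm (c (greedy c M x) - x) < norm (c k - x)" if "k < greedy c M x" for k
  proof (rule ccontr)
    assume "\<not> ?thesis"
    hence "?P k" using P that by force
    hence "greedy c M x \<le> k" unfolding greedy_def by (rule Least_le)
    thus False using that by simp
  qed
  thus ?thesis using P by blast
qed

lemma greedy_seg:
  assumes M: "M \<ge> 1" and j: "greedy c M x = j" and s: "0 \<le> s" "s \<le> 1"
  shows "greedy c M (c j + s *\<^sub>R (x - c j)) = j"
proof -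
  let ?y = "c j + s *\<^sub>R (x - c j)"
  have g: "j < M" "\<forall>k<M. norm (c j - x) \<le> norm (c k - x)"
    "\<forall>k<j. norm (c j - x) < norm (c k - x)" using greedy_prop[OF M, of c x] j by auto
  have dy: "norm (c j - ?y) = s * norm (c j - x)"
    using s by (simp add: norm_minus_commute)
  have yx: "norm (?y - x) = (1 - s) * norm (c j - x)"
  proof -
    have "?y - x = (1 - s) *\<^sub>R (c j - x)" by (simp add: algebra_simps)
    thus ?thesis using s by simp
  qed
  have tri: "norm (c k - x) - norm (c j - x) + s * norm (c j - x) \<le> norm (c k - ?y)" for k
  proof -
    have "norm (c k - x) \<le> norm (c k - ?y) + norm (?y - x)"
      using norm_triangle_ineq[of "c k - ?y" "?y - x"] by simp
    thus ?thesis unfolding yx by (simp add: algebra_simps)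
  qed
  let ?P = "\<lambda>j. j < M \<and> (\<forall>k<M. norm (c j - ?y) \<le> norm (c k - ?y))"
  have Pj: "?P j" using g tri dy
  proof (intro conjI allI impI)
    fix k assume "k < M"
    thus "norm (c j - ?y) \<le> norm (c k - ?y)" using g(2) tri[of k] unfolding dy by fastforce
  qed (rule g(1))
  show ?thesis unfolding greedy_def
  proof (rule Least_equality)
    show "?P j" by (rule Pj)
    fix k assume Pk: "?P k"
    show "j \<le> k"
    proof (rule ccontr)
      assume "\<not> j \<le> k"
      hence "k < j" by simp
      hence "norm (c j - x) < norm (c k - x)" using g by auto
      hence "norm (c j - ?y) < norm (c k - ?y)" using tri[of k] unfolding dy by linarith
      moreover have "norm (c k - ?y) \<le> norm (c j - ?y)" using Pk g by auto
      ultimately show False by simp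
    qed
  qed
qed

lemma ssq_props:
  assumes "0 < a" "a \<le> 1" "0 < l" "l \<le> 1"
  shows "0 \<le> ssq ((1-l)*a) l t \<and> ssq ((1-l)*a) l (Suc t) \<le> ssq ((1-l)*a) l t
         \<and> ssq ((1-l)*a) l t \<le> 1"
proof (induction t)
  case 0
  have "(1-l)*a \<le> 1 - l" using assms by (simp add: mult_left_le)
  then show ?case by simp
next
  case (Suc t)
  have b: "0 \<le> (1-l)*a" using assms by simp
  have "(1-l)*a * ssq ((1-l)*a) l (Suc t) \<le> (1-l)*a * ssq ((1-l)*a) l t"
    using Suc b by (intro mult_left_mono) auto
  moreover have "0 \<le> (1-l)*a * ssq ((1-l)*a) l t" using Suc b by simp
  moreover have "(1-l)*a * ssq ((1-l)*a) l t \<le> (1-l)*a" using Suc b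
    by (simp add: mult_left_le)
  moreover have "(1-l)*a \<le> 1 - l" using assms by (simp add: mult_left_le)
  ultimately show ?case using Suc assms by simp
qed

lemma traj_form:
  assumes M: "M \<ge> 1" and "0 < a" "a \<le> 1" "0 < l" "l \<le> 1"
  shows "user_traj c M a l x0 t = c (greedy c M x0) + ssq ((1-l)*a) l t *\<^sub>R (x0 - c (greedy c M x0))
     \<and> greedy c M (user_traj c M a l x0 t) = greedy c M x0"
proof (induction t)
  case 0
  then show ?case by simp
next
  case (Suc t)
  let ?j = "greedy c M x0"
  let ?s = "ssq ((1-l)*a) l t"
  have IH1: "user_traj c M a l x0 t = c ?j + ?s *\<^sub>R (x0 - c ?j)" using Suc by blast
  have IH2: "greedy c M (user_traj c M a l x0 t) = ?j" using Suc by blast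
  have e0: "user_traj c M a l x0 (Suc t) = (1 - l) *\<^sub>R (a *\<^sub>R (c ?j + ?s *\<^sub>R (x0 - c ?j))
                     + (1 - a) *\<^sub>R c ?j) + l *\<^sub>R x0"
    by (simp only: user_traj.simps IH2, simp only: IH1)
  have e: "user_traj c M a l x0 (Suc t) = c ?j + ssq ((1-l)*a) l (Suc t) *\<^sub>R (x0 - c ?j)"
    unfolding e0 by (simp add: algebra_simps)
  have "0 \<le> ssq ((1-l)*a) l (Suc t)" "ssq ((1-l)*a) l (Suc t) \<le> 1"
    using ssq_props[OF assms(2-5), of "Suc t"] by auto
  then show ?case using e greedy_seg[OF M refl] by simp
qed

theorem lemma1:
  fixes N M :: nat
    and u0 c :: "nat \<Rightarrow> real^'n"
    and A lam :: "nat \<Rightarrow> real"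
  assumes "N \<ge> 1" and "M \<ge> 1"
    and "\<forall>i<N. \<forall>k. u0 i $ k \<in> {-1..1}"
    and "\<forall>j<M. \<forall>k. c j $ k \<in> {-1..1}"
    and "\<forall>i<N. 0 < A i \<and> A i \<le> 1"
    and "\<forall>i<N. 0 < lam i \<and> lam i \<le> 1"
  defines "u \<equiv> (\<lambda>i t. user_traj c M (A i) (lam i) (u0 i) t)"
    and "F \<equiv> (\<lambda>t j. {i. i < N \<and> greedy c M (user_traj c M (A i) (lam i) (u0 i) t) = j})"
  shows "(\<forall>t. \<forall>j<M. F t j = F 0 j)
         \<and> (\<forall>i<N. \<exists>ustar. (\<lambda>t. u i t) \<longlonglongrightarrow> ustar)
         \<and> (\<forall>j<M. \<forall>i\<in>F 0 j. \<forall>t. norm (u i (Suc t) - c j) \<le> norm (u i t - c j))"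
proof -
  have TF: "\<And>i t. i < N \<Longrightarrow> user_traj c M (A i) (lam i) (u0 i) t
      = c (greedy c M (u0 i)) + ssq ((1-lam i)*A i) (lam i) t *\<^sub>R (u0 i - c (greedy c M (u0 i)))
     \<and> greedy c M (user_traj c M (A i) (lam i) (u0 i) t) = greedy c M (u0 i)"
    using traj_form[OF assms(2)] assms(5,6) by blast
  have SP: "\<And>i t. i < N \<Longrightarrow> 0 \<le> ssq ((1-lam i)*A i) (lam i) t \<and>
      ssq ((1-lam i)*A i) (lam i) (Suc t) \<le> ssq ((1-lam i)*A i) (lam i) t"
    using ssq_props assms(5,6) by blast
  have G: "\<And>i t. i < N \<Longrightarrow> greedy c M (user_traj c M (A i) (lam i) (u0 i) t) = greedy c M (u0 i)"
    using TF by blast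
  have P1: "\<forall>t. \<forall>j<M. F t j = F 0 j"
    unfolding F_def using G by auto
  have P2: "\<forall>i<N. \<exists>ustar. (\<lambda>t. u i t) \<longlonglongrightarrow> ustar"
  proof (intro allI impI)
    fix i assume i: "i < N"
    let ?s = "ssq ((1-lam i)*A i) (lam i)"
    have "decseq ?s" using SP[OF i] by (simp add: decseq_SucI)
    then obtain L where L: "?s \<longlonglongrightarrow> L"
      using decseq_convergent[of ?s 0] SP[OF i] by blast
    have "(\<lambda>t. c (greedy c M (u0 i)) + ?s t *\<^sub>R (u0 i - c (greedy c M (u0 i))))
       \<longlonglongrightarrow> c (greedy c M (u0 i)) + L *\<^sub>R (u0 i - c (greedy c M (u0 i)))"
      by (intro tendsto_intros L)
    thus "\<exists>ustar. (\<lambda>t. u i t) \<longlonglongrightarrow> ustar" unfolding u_def using TF[OF i] by auto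
  qed
  have P3: "\<forall>j<M. \<forall>i\<in>F 0 j. \<forall>t. norm (u i (Suc t) - c j) \<le> norm (u i t - c j)"
  proof (intro allI impI ballI)
    fix j i t assume "j < M" "i \<in> F 0 j"
    hence i: "i < N" and gj: "greedy c M (u0 i) = j" unfolding F_def by auto
    let ?s = "ssq ((1-lam i)*A i) (lam i)"
    have "norm (u i (Suc t) - c j) = ?s (Suc t) * norm (u0 i - c j)"
      unfolding u_def using TF[OF i, of "Suc t"] gj SP[OF i, of "Suc t"] by simp
    also have "\<dots> \<le> ?s t * norm (u0 i - c j)"
      using SP[OF i, of t] by (simp add: mult_right_mono)
    also have "\<dots> = norm (u i t - c j)"
      unfolding u_def using TF[OF i, of t] gj SP[OF i, of t] by simp
    finally show "norm (u i (Suc t) - c j) \<le> norm (u i t - c j)" .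
  qed
  show ?thesis using P1 P2 P3 by blast
qed

end
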